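(* Assume $\sigma_1(x)=\tfrac12\sigma_1''(0)\,x(x-a_1)$ with $\sigma_1''(0)\ne0$ and real $a_1>0$, and that $\frac{\tau(0)}{\frac12\sigma_1''(0)}=\frac{a_1}{1-q^{-1}}$ and $\frac{\tau'(0)}{\frac12\sigma_1''(0)}\ne-\frac{1}{1-q^{-1}}$, so that $\sigma_2(x)=\tfrac12\sigma_2''(0)x^2$ with $\tfrac12\sigma_2''(0)=q\big[\tfrac12\sigma_1''(0)+(1-q^{-1})\tau'(0)\big]\ne0$. Let $\Lambda_q=q^{-2}\Big[1+\frac{(1-q^{-1})\tau'(0)}{\frac12\sigma_1''(0)}\Big]$ and assume $q^2\Lambda_q<0$. Put $b=a_1$ and $$\rho(x)=|x|^{\alpha}\sqrt{x^{\log_qx-1}}\,(qx/b;q)_\infty,\qquad q^{\alpha}=-\frac{q^{-2}\tfrac12\sigma_2''(0)}{\tfrac12\sigma_1''(0)b}.$$ Then there exist polynomials $P_n$, $n\in\mathbb{N}_0$, with $P_n$ of degree $n$ a solution of the q-EHT with $\lambda=\lambda_n$, and nonzero constants $d_n^2$, such that for all $m,n\in\mathbb{N}_0$ $$\int_0^{b}P_n(x)P_m(x)\rho(x)\,d_qx=d_n^2\delta_{mn},$$ i.e. orthogonality with respect to $\rho$ supported on $\{q^kb\}_{k\in\mathbb{N}_0}$.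
   Context: Throughout $0<q<1$. For a function $y$ and $\zeta\in\{q,q^{-1}\}$, $D_\zeta y(x)=\frac{y(x)-y(\zeta x)}{(1-\zeta)x}$ for $x\ne0$ and $D_\zeta y(0)=y'(0)$; $[n]_q=\frac{1-q^n}{1-q}$. Let $\sigma_1$ be a real polynomial of degree at most two, $\tau(x)=\tau'(0)x+\tau(0)$ a real polynomial with $\tau'(0)\ne0$, and $\sigma_2(x):=q[\sigma_1(x)+(1-q^{-1})x\tau(x)]$. The q-EHT with parameter $n$ is $\sigma_1(x)D_{q^{-1}}D_qy(x)+\tau(x)D_qy(x)+\lambda_ny(x)=0$, $\lambda_n=-[n]_q\big(\tau'(0)+\tfrac12[n-1]_{q^{-1}}\sigma_1''(0)\big)$. $(\beta;q)_\infty=\prod_{k\ge0}(1-\beta q^k)$. For $q^\alpha=c$ ($c\ne0$), $\alpha$ is any complex number with $e^{\alpha\ln q}=c$ and $|x|^\alpha:=e^{\alpha\ln|x|}$; for $x>0$, $\sqrt{x^{\log_qx-1}}:=\exp\big(\tfrac12(\log_qx-1)\ln x\big)$. For $b>0$, $\int_0^b f(x)\,d_qx=(1-q)b\sum_{j\ge0}q^jf(q^jb)$. *)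

theory Defs
  imports "HOL-Analysis.Analysis" "HOL-Computational_Algebra.Polynomial"
begin

definition qD :: "real \<Rightarrow> (real \<Rightarrow> real) \<Rightarrow> real \<Rightarrow> real" where
  "qD \<zeta> y x = (if x = 0 then deriv y 0 else (y x - y (\<zeta> * x)) / ((1 - \<zeta>) * x))"

definition qnum :: "real \<Rightarrow> int \<Rightarrow> real" where
  "qnum z k = (1 - z powi k) / (1 - z)"

definition qpoch_inf :: "real \<Rightarrow> real \<Rightarrow> real" where
  "qpoch_inf \<beta> q = prodinf (\<lambda>k. 1 - \<beta> * q ^ k)"

definition has_qint :: "real \<Rightarrow> (real \<Rightarrow> complex) \<Rightarrow> real \<Rightarrow> complex \<Rightarrow> bool" where
  "has_qint q f b I \<longleftrightarrow>
     (\<lambda>j. complex_of_real ((1 - q) * b * q ^ j) * f (q ^ j * b)) sums I"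

end

theory Submission
  imports Defs
begin

locale qs = fixes q s a1 t1 :: real
  assumes q0: "0<q" and q1: "q<1" and s0: "s\<noteq>0" and a1: "0<a1"
    and om: "(s + (1 - 1/q)*t1)/s < 0"
begin

definition AA :: real where "AA = -(s + (1 - 1/q)*t1)/((1-q)*(1-1/q))"
definition BB :: real where "BB = - q * s / ((1 - q) * (1 - 1 / q))"
definition "phi j = AA*(q^j - 1) + BB*((1/q)^j - 1)"
definition "cf n j = (if j \<le> n then \<Prod>i\<in>{j..<n}. a1*BB*((1/q)^(Suc i) - 1)/(phi i - phi n) else 0)"
definition "P n = Abs_poly (cf n)"

lemma den: "(1-q)*(1-1/q) < 0"
proof -
  have "1 - 1/q < 0" using q0 q1 by (simp add: field_simps)
  thus ?thesis using q1 by (simp add: mult_pos_neg)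
qed

lemma AB: "AA*BB < 0"
proof -
  define D where "D = (1-q)*(1-1/q)"
  define w where "w = (s + (1 - 1/q)*t1)/s"
  have A': "AA = - s * w / D" unfolding AA_def w_def D_def using s0 by simp
  have B': "BB = - q * s / D" unfolding BB_def D_def by simp
  have "AA*BB = q * s^2 * w / D^2" unfolding A' B' by (simp add: field_simps power2_eq_square)
  also have "\<dots> < 0"
  proof -
    have "q * s^2 > 0" using q0 s0 by simp
    moreover have "w < 0" using om unfolding w_def .
    ultimately have "q * s^2 * w < 0" by (simp add: mult_pos_neg)
    moreover have "D^2 > 0" using den unfolding D_def by (metis less_numeral_extra(3) zero_less_power2)
    ultimately show ?thesis by (simp add: divide_neg_pos)
  qed
  finally show ?thesis .
qed

lemma phi_inj: assumes "j \<noteq> k" shows "phi j \<noteq> phi k"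
proof -
  have main: "phi j \<noteq> phi k" if "j < k" for j k
  proof -
    have a: "q^k < q^j" using that q0 q1 by (simp add: power_strict_decreasing)
    have b: "(1/q)^j < (1/q)^k" using that q0 q1 by (intro power_strict_increasing) (auto simp: field_simps)
    have "phi k - phi j = AA*(q^k - q^j) + BB*((1/q)^k - (1/q)^j)"
      unfolding phi_def by (simp add: algebra_simps)
    have "BB*(phi k - phi j) = (AA*BB)*(q^k - q^j) + BB^2*((1/q)^k - (1/q)^j)"
      unfolding phi_def by (simp add: algebra_simps power2_eq_square)
    moreover have "(AA*BB)*(q^k - q^j) > 0" using AB a by (simp add: mult_neg_neg)
    moreover have "BB \<noteq> 0" using AB by auto
    hence "BB^2*((1/q)^k - (1/q)^j) > 0" using b by simp
    ultimately have "BB*(phi k - phi j) > 0" by linarith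
    thus ?thesis by auto
  qed
  show ?thesis using assms main[of j k] main[of k j] by (cases "j<k") auto
qed

lemma cf_rec: "cf n j * (phi j - phi n) = a1*BB*((1/q)^(Suc j) - 1) * cf n (Suc j)"
proof (cases "j < n")
  case True
  have "cf n j = a1*BB*((1/q)^(Suc j) - 1)/(phi j - phi n) * cf n (Suc j)"
    using True unfolding cf_def by (simp add: prod.atLeast_Suc_lessThan)
  moreover have "phi j - phi n \<noteq> 0" using phi_inj[of j n] True by auto
  ultimately show ?thesis by simp
next
  case False
  thus ?thesis unfolding cf_def by auto
qed

lemma coeff_P: "coeff (P n) = cf n"
  unfolding P_def by (rule coeff_Abs_poly[of n]) (auto simp: cf_def)

lemma cf_nn: "cf n n = 1" by (simp add: cf_def)

lemma degree_P: "degree (P n) = n"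
  by (rule antisym) (auto simp: coeff_P cf_def intro!: degree_le le_degree)

lemma P_nz: "P n \<noteq> 0"
  using coeff_P[of n] cf_nn[of n] by (metis coeff_0 zero_neq_one)

lemma poly_P: "poly (P n) x = (\<Sum>j\<le>n. cf n j * x^j)"
  by (simp add: poly_altdef degree_P coeff_P)

lemma core:
  assumes x: "x \<noteq> 0"
  shows "AA*(poly (P n) (q*x) - poly (P n) x) + BB*(x - a1)/x*(poly (P n) (x/q) - poly (P n) x)
         - phi n * poly (P n) x = 0"
proof -
  let ?c = "cf n"
  have e1: "poly (P n) (q*x) - poly (P n) x = (\<Sum>j\<le>n. ?c j*(q^j - 1)*x^j)"
    by (simp add: poly_P sum_subtractf[symmetric] power_mult_distrib algebra_simps)
  have e2: "poly (P n) (x/q) - poly (P n) x = (\<Sum>j\<le>n. ?c j*((1/q)^j - 1)*x^j)"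
    by (simp add: poly_P sum_subtractf[symmetric] power_divide algebra_simps)
  define S2 where "S2 = (\<Sum>j\<le>n. ?c j*((1/q)^j - 1)*x^j)"
  have m: "x * (AA*(\<Sum>j\<le>n. ?c j*(q^j - 1)*x^j) + BB*S2 - phi n * poly (P n) x)
      = x * (\<Sum>j\<le>n. ?c j * (phi j - phi n) * x^j)"
    unfolding S2_def poly_P phi_def
    by (simp add: sum_distrib_left sum_subtractf[symmetric] sum.distrib[symmetric] algebra_simps)
  also have "\<dots> = (\<Sum>j\<le>n. a1*BB*(((1/q)^(Suc j) - 1) * cf n (Suc j)) * x^(Suc j))"
    unfolding sum_distrib_left
  proof (rule sum.cong[OF refl])
    fix j assume "j \<in> {..n}"
    have "x * (?c j * (phi j - phi n) * x^j) = (?c j * (phi j - phi n)) * x^(Suc j)" by simp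
    also have "\<dots> = a1*BB*(((1/q)^(Suc j) - 1) * cf n (Suc j)) * x^(Suc j)"
      unfolding cf_rec by simp
    finally show "x * (?c j * (phi j - phi n) * x^j) = a1*BB*(((1/q)^(Suc j) - 1) * cf n (Suc j)) * x^(Suc j)" .
  qed
  also have "\<dots> = (\<Sum>j\<le>Suc n. a1*BB*(((1/q)^j - 1) * cf n j) * x^j)"
    by (subst sum.atMost_Suc_shift) simp
  also have "\<dots> = a1*BB*S2"
    by (simp add: S2_def sum_distrib_left cf_def algebra_simps)
  finally have m2: "x * (AA*(\<Sum>j\<le>n. ?c j*(q^j - 1)*x^j) + BB*S2 - phi n * poly (P n) x) = a1*BB*S2" .
  have "x * (AA*(poly (P n) (q*x) - poly (P n) x) + BB*(x - a1)/x*(poly (P n) (x/q) - poly (P n) x)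
         - phi n * poly (P n) x) = 
       x * (AA*(\<Sum>j\<le>n. ?c j*(q^j - 1)*x^j) + BB*S2 - phi n * poly (P n) x) - a1*BB*S2"
    unfolding e1 e2 S2_def[symmetric] using x by (simp add: field_simps)
  also have "\<dots> = 0" using m2 by simp
  finally show ?thesis using x by simp
qed

lemma omq: "1 - 1/q = (q - 1)/q" using q0 by (simp add: field_simps)

lemma lam_eq: "- qnum q (int n) * (t1 + qnum (1/q) (int n - 1) * s) = - phi n"
proof (cases n)
  case 0 thus ?thesis by (simp add: qnum_def phi_def)
next
  case (Suc m)
  have h: "int n - 1 = int m" using Suc by simp
  define r where "r = q^m"
  have r0: "r > 0" unfolding r_def using q0 by simp
  have qq: "q \<noteq> 1" "q \<noteq> 0" using q0 q1 by auto
  have e: "q^n = q*r" "(1/q)^m = 1/r" "(1/q)^n = 1/(q*r)" unfolding r_def Suc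
    by (simp_all add: power_one_over)
  define k where "k = 1 - q"
  have k: "k = 1 - q" "k \<noteq> 0" "1 - q = k" "q - 1 = - k" using qq unfolding k_def by auto
  have "- qnum q (int n) * (t1 + qnum (1/q) (int n - 1) * s) = - ((1 - q*r)/k * (t1 + (1 - 1/r)/(-k/q) * s))"
    unfolding qnum_def h power_int_of_nat e omq k(3,4) by simp
  also have "\<dots> = - phi n"
    unfolding phi_def AA_def BB_def e omq k(3,4) using qq s0 r0 k(2)
    by (simp add: field_simps)
  finally show ?thesis .
qed

lemma alg:
  assumes x: "x \<noteq> 0" and t0: "t0 / s = a1 / (1 - 1 / q)"
  shows "s * x * (x - a1) * (((f0 - f1)/((1-q)*x) - (f2 - f0)/((1-q)*((1/q)*x)))/((1 - 1/q)*x))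
     + (t1*x + t0) * ((f0 - f1)/((1-q)*x)) - ph * f0
     = AA*(f1 - f0) + BB*(x - a1)/x*(f2 - f0) - ph * f0"
proof -
  have qq: "q \<noteq> 1" "q \<noteq> 0" "1 - q \<noteq> 0" "q - 1 \<noteq> 0" using q0 q1 by auto
  define k where "k = 1 - q"
  have k: "k = 1 - q" "k \<noteq> 0" "1 - q = k" "q - 1 = - k" using qq unfolding k_def by auto
  have t0': "t0 = - s * a1 * q / k" using t0 s0 qq k(2,4) unfolding omq by (simp add: field_simps)
  show ?thesis unfolding t0' AA_def BB_def omq k(3,4) using qq x s0 k(2)
    by (simp add: field_simps)
qed

lemma eqn:
  assumes t0: "t0 / s = a1 / (1 - 1 / q)"
  shows "(s * x * (x - a1)) * qD (1 / q) (qD q (poly (P n))) x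
              + (t1 * x + t0) * qD q (poly (P n)) x
              + (- qnum q (int n) * (t1 + qnum (1 / q) (int n - 1) * s)) * poly (P n) x = 0"
proof (cases "x = 0")
  case True
  have qq: "q \<noteq> 1" "q \<noteq> 0" using q0 q1 by auto
  define k where "k = 1 - q"
  have k: "k \<noteq> 0" "1 - q = k" "q - 1 = - k" using qq unfolding k_def by auto
  have t0': "t0 = - s * a1 * q / k" using t0 s0 qq k unfolding omq by (simp add: field_simps)
  have d: "qD q (poly (P n)) 0 = cf n 1"
    unfolding qD_def by (simp add: DERIV_imp_deriv[OF poly_DERIV] poly_0_coeff_0 coeff_pderiv coeff_P)
  have r: "cf n 0 * (0 - phi n) = a1*BB*((1/q) - 1) * cf n 1"
    using cf_rec[of n 0] by (simp add: phi_def)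
  have "t0 * cf n 1 - phi n * cf n 0 = 0"
    using r unfolding t0' BB_def omq k using qq s0 k
    by (simp add: field_simps)
  thus ?thesis using True d unfolding lam_eq by (simp add: poly_0_coeff_0 coeff_P)
next
  case False
  have qq: "q \<noteq> 1" "q \<noteq> 0" using q0 q1 by auto
  have e: "qD q (poly (P n)) x = (poly (P n) x - poly (P n) (q*x))/((1-q)*x)"
    "qD q (poly (P n)) ((1/q)*x) = (poly (P n) (x/q) - poly (P n) x)/((1-q)*((1/q)*x))"
    using False qq by (simp_all add: qD_def)
  have e2: "qD (1 / q) (qD q (poly (P n))) x = (qD q (poly (P n)) x - qD q (poly (P n)) ((1/q)*x))/((1 - 1/q)*x)"
    using False by (simp add: qD_def)
  show ?thesis unfolding e2 e(2) unfolding e(1) lam_eq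
    using alg[OF False t0, of "poly (P n) x" "poly (P n) (q*x)" "poly (P n) (x/q)" "phi n"] core[OF False, of n]
    by simp
qed

definition "ww = (s + (1 - 1/q)*t1)/s"
definition X :: "nat \<Rightarrow> real" where "X k = q^k * a1"
definition "rr k = - ww * q^k / (1 - q^(Suc k))"
definition "V k = (\<Prod>i<k. rr i)"
definition "F n k = poly (P n) (X k)"

lemma ww_neg: "ww < 0" using om unfolding ww_def .

lemma X_pos: "X k > 0" unfolding X_def using q0 a1 by simp
lemma X_le: "X k \<le> a1" unfolding X_def using q0 q1 a1 by (simp add: power_le_one mult_left_le_one_le)
lemma X_Suc: "X (Suc k) = q * X k" unfolding X_def by simp

lemma rr_pos: "rr k > 0"
proof -
  have "q^(Suc k) < 1" using q0 q1 by (rule power_Suc_less_one)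
  moreover have "- ww * q^k > 0" using ww_neg q0 by (simp add: mult_neg_pos)
  ultimately show ?thesis unfolding rr_def by (intro divide_pos_pos) auto
qed

lemma V_pos: "V k > 0" unfolding V_def using rr_pos by (simp add: prod_pos)
lemma V_Suc: "V (Suc k) = rr k * V k" unfolding V_def by simp

lemma pearson: "V k * AA = V (Suc k) * (BB * (X (Suc k) - a1) / X (Suc k))"
proof -
  have qq: "q \<noteq> 1" "q \<noteq> 0" using q0 q1 by auto
  define k' where "k' = 1 - q"
  have kk: "k' \<noteq> 0" "1 - q = k'" "q - 1 = - k'" using qq unfolding k'_def by auto
  have qs: "1 - q^(Suc k) \<noteq> 0" using power_Suc_less_one[OF q0 q1, of k] by simp
  have "V (Suc k) * (BB * (X (Suc k) - a1) / X (Suc k)) = V k * (rr k * (BB * (X (Suc k) - a1) / X (Suc k)))"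
    by (simp add: V_Suc)
  also have "rr k * (BB * (X (Suc k) - a1) / X (Suc k)) = AA"
    unfolding rr_def X_def AA_def BB_def ww_def omq kk using qq s0 a1 qs kk(1)
    by (simp add: field_simps)
  finally show ?thesis by simp
qed

lemma V_summable: "summable V"
proof -
  have w: "- ww / (1 - q) > 0" using ww_neg q1 by (intro divide_pos_pos) auto
  have "1 / 2 / (- ww / (1 - q)) > 0" using w by (metis divide_pos_pos half_gt_zero_iff zero_less_one)
  then obtain N where N: "q^N < 1 / 2 / (- ww / (1 - q))"
    using real_arch_pow_inv[of "1 / 2 / (- ww / (1 - q))" q] q1 by blast
  show ?thesis
  proof (rule summable_ratio_test[of "1/2" N])
    fix n assume n: "N \<le> n"
    have "q^n \<le> q^N" using n q0 q1 by (simp add: power_decreasing)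
    have "rr n \<le> - ww * q^n / (1 - q)"
      unfolding rr_def
    proof (rule divide_left_mono)
      show "1 - q \<le> 1 - q ^ Suc n" using q0 q1 by (simp add: power_le_one mult_left_le_one_le)
      show "0 \<le> - ww * q ^ n" using ww_neg q0 by (simp add: mult_nonpos_nonneg)
      show "0 < (1 - q ^ Suc n) * (1 - q)" using power_Suc_less_one[OF q0 q1, of n] q1 by simp
    qed
    also have "\<dots> = (- ww / (1 - q)) * q^n" by simp
    also have "\<dots> \<le> (- ww / (1 - q)) * q^N" using \<open>q^n \<le> q^N\<close> w by (intro mult_left_mono) auto
    also have "\<dots> \<le> (- ww / (1 - q)) * (1 / 2 / (- ww / (1 - q)))"
      using N w by (intro mult_left_mono) auto
    also have "\<dots> = 1/2" using w by (metis div_by_0 less_irrefl nonzero_mult_div_cancel_left times_divide_eq_right)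
    finally have "rr n \<le> 1/2" .
    thus "norm (V (Suc n)) \<le> 1/2 * norm (V n)"
      using V_pos[of n] V_pos[of "Suc n"] rr_pos[of n] by (simp add: V_Suc)
  qed simp
qed

lemma sumV: assumes "\<And>k. \<bar>h k\<bar> \<le> C * V k" shows "summable h"
  by (rule summable_comparison_test'[of "\<lambda>k. C * V k" 0]) (auto intro: summable_mult V_summable assms)

lemma F_bound: "\<exists>C. \<forall>k. \<bar>F n k\<bar> \<le> C"
proof -
  have "\<bar>F n k\<bar> \<le> (\<Sum>j\<le>n. \<bar>cf n j\<bar> * a1^j)" for k
  proof -
    have "\<bar>F n k\<bar> \<le> (\<Sum>j\<le>n. \<bar>cf n j * X k^j\<bar>)" unfolding F_def poly_P by (rule sum_abs)
    also have "\<dots> \<le> (\<Sum>j\<le>n. \<bar>cf n j\<bar> * a1^j)"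
      using X_pos[of k] X_le[of k]
      by (intro sum_mono) (auto simp: abs_mult power_abs intro!: mult_left_mono power_mono)
    finally show ?thesis .
  qed
  thus ?thesis by blast
qed

lemma lattice_eq: 
  "phi n * F n 0 = AA * (F n 1 - F n 0)"
  "phi n * F n (Suc k) = AA * (F n (Suc (Suc k)) - F n (Suc k))
      + BB * (X (Suc k) - a1) / X (Suc k) * (F n k - F n (Suc k))"
proof -
  have qq: "q \<noteq> 0" using q0 by auto
  have "AA*(poly (P n) (q*X 0) - poly (P n) (X 0)) + BB*(X 0 - a1)/X 0*(poly (P n) (X 0/q) - poly (P n) (X 0))
         - phi n * poly (P n) (X 0) = 0" using core X_pos[of 0] by simp
  moreover have "X 0 = a1" "q * X 0 = X 1" by (simp_all add: X_def)
  ultimately show "phi n * F n 0 = AA * (F n 1 - F n 0)" unfolding F_def by simp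
  have "AA*(poly (P n) (q*X (Suc k)) - poly (P n) (X (Suc k))) + BB*(X (Suc k) - a1)/X (Suc k)*(poly (P n) (X (Suc k)/q) - poly (P n) (X (Suc k)))
         - phi n * poly (P n) (X (Suc k)) = 0" using core X_pos[of "Suc k"] by (metis less_irrefl)
  moreover have "X (Suc k) / q = X k" "q * X (Suc k) = X (Suc (Suc k))" using qq by (simp_all add: X_Suc)
  ultimately show "phi n * F n (Suc k) = AA * (F n (Suc (Suc k)) - F n (Suc k))
      + BB * (X (Suc k) - a1) / X (Suc k) * (F n k - F n (Suc k))" unfolding F_def by simp
qed

definition bnd :: "(nat \<Rightarrow> real) \<Rightarrow> bool" where "bnd u \<longleftrightarrow> (\<exists>C. \<forall>k. \<bar>u k\<bar> \<le> C)"

lemma bnd_F: "bnd (F n)" unfolding bnd_def by (rule F_bound)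
lemma bnd_Fs: "bnd (\<lambda>k. F n (Suc k))" using F_bound[of n] unfolding bnd_def by blast
lemma bnd_diff: "bnd u \<Longrightarrow> bnd v \<Longrightarrow> bnd (\<lambda>k. u k - v k)"
proof -
  assume "bnd u" "bnd v"
  then obtain A B where A: "\<And>k. \<bar>u k\<bar> \<le> A" and B: "\<And>k. \<bar>v k\<bar> \<le> B" unfolding bnd_def by blast
  have "\<bar>u k - v k\<bar> \<le> A + B" for k using A[of k] B[of k] by linarith
  thus ?thesis unfolding bnd_def by blast
qed
lemma bnd_mult: "bnd u \<Longrightarrow> bnd v \<Longrightarrow> bnd (\<lambda>k. u k * v k)"
proof -
  assume "bnd u" "bnd v"
  then obtain A B where A: "\<And>k. \<bar>u k\<bar> \<le> A" and B: "\<And>k. \<bar>v k\<bar> \<le> B" unfolding bnd_def by blast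
  have "\<bar>u k * v k\<bar> \<le> A * B" for k unfolding abs_mult
    by (rule mult_mono[OF A B]) (use A[of k] in auto)
  thus ?thesis unfolding bnd_def by blast
qed

lemma sumV2: assumes "bnd u" shows "summable (\<lambda>k. V k * u k)"
proof -
  obtain C where C: "\<And>k. \<bar>u k\<bar> \<le> C" using assms unfolding bnd_def by blast
  show ?thesis
  proof (rule sumV[of _ C])
    fix k show "\<bar>V k * u k\<bar> \<le> C * V k" using C[of k] V_pos[of k]
      by (simp add: abs_mult mult.commute)
  qed
qed

lemma sym: "phi n * (\<Sum>k. V k * (F m k * F n k)) =
   - AA * (\<Sum>k. V k * ((F n (Suc k) - F n k) * (F m (Suc k) - F m k)))"
proof -
  define f where "f = F n"
  define g where "g = F m"
  define T where "T k = AA * (V k * (g k * (f (Suc k) - f k)))" for k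
  define U where "U k = AA * (V k * (g (Suc k) * (f k - f (Suc k))))" for k
  define h where "h k = phi n * (V k * (g k * f k))" for k
  have bf: "bnd f" "bnd g" "bnd (\<lambda>k. f (Suc k))" "bnd (\<lambda>k. g (Suc k))"
    unfolding f_def g_def by (simp_all add: bnd_F bnd_Fs)
  have sT: "summable T" unfolding T_def
    by (intro summable_mult sumV2 bnd_mult bnd_diff bf)
  have sU: "summable U" unfolding U_def
    by (intro summable_mult sumV2 bnd_mult bnd_diff bf)
  have sh: "summable h" unfolding h_def
    by (intro summable_mult sumV2 bnd_mult bnd_diff bf)
  have h0: "h 0 = T 0" unfolding h_def T_def f_def g_def
    using lattice_eq(1)[of n] by (simp add: V_def)
  have hS: "h (Suc k) = T (Suc k) + U k" for k
  proof -
    have "h (Suc k) = V (Suc k) * g (Suc k) * (phi n * f (Suc k))" unfolding h_def by simp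
    also have "\<dots> = V (Suc k) * g (Suc k) * (AA * (f (Suc (Suc k)) - f (Suc k))
      + BB * (X (Suc k) - a1) / X (Suc k) * (f k - f (Suc k)))"
      unfolding f_def lattice_eq(2) ..
    also have "\<dots> = T (Suc k) + g (Suc k) * (V (Suc k) * (BB * (X (Suc k) - a1) / X (Suc k))) * (f k - f (Suc k))"
      unfolding T_def by (simp add: algebra_simps)
    also have "\<dots> = T (Suc k) + U k" unfolding pearson[symmetric] U_def by (simp add: algebra_simps)
    finally show ?thesis .
  qed
  have "suminf h = h 0 + (\<Sum>k. h (Suc k))" using suminf_split_head[OF sh] by simp
  also have "(\<Sum>k. h (Suc k)) = (\<Sum>k. T (Suc k)) + suminf U"
    unfolding hS using summable_ignore_initial_segment[OF sT, of 1] sU by (simp add: suminf_add)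
  also have "h 0 + ((\<Sum>k. T (Suc k)) + suminf U) = suminf T + suminf U"
    using suminf_split_head[OF sT] h0 by simp
  also have "\<dots> = (\<Sum>k. T k + U k)" using sT sU by (simp add: suminf_add)
  also have "\<dots> = (\<Sum>k. - AA * (V k * ((f (Suc k) - f k) * (g (Suc k) - g k))))"
    unfolding T_def U_def by (simp add: algebra_simps)
  also have "\<dots> = - AA * (\<Sum>k. V k * ((f (Suc k) - f k) * (g (Suc k) - g k)))"
    by (rule suminf_mult, intro sumV2 bnd_mult bnd_diff bf)
  finally have "suminf h = - AA * (\<Sum>k. V k * ((f (Suc k) - f k) * (g (Suc k) - g k)))" .
  moreover have "suminf h = phi n * (\<Sum>k. V k * (F m k * F n k))"
    unfolding h_def f_def g_def using sumV2[of "\<lambda>k. F m k * F n k"]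
    by (intro suminf_mult) (auto intro: bnd_mult bnd_F)
  ultimately show ?thesis unfolding f_def g_def by simp
qed

lemma orth: assumes "m \<noteq> n" shows "(\<Sum>k. V k * (F n k * F m k)) = 0"
proof -
  have "phi n * (\<Sum>k. V k * (F m k * F n k)) = phi m * (\<Sum>k. V k * (F n k * F m k))"
    unfolding sym by (simp add: algebra_simps)
  hence "(phi n - phi m) * (\<Sum>k. V k * (F n k * F m k)) = 0" by (simp add: algebra_simps)
  thus ?thesis using phi_inj[of n m] assms by simp
qed

lemma diag_pos: "(\<Sum>k. V k * (F n k * F n k)) > 0"
proof -
  have "\<exists>k. F n k \<noteq> 0"
  proof (rule ccontr)
    assume "\<not> ?thesis"
    hence "range X \<subseteq> {x. poly (P n) x = 0}" unfolding F_def by auto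
    moreover have "finite {x. poly (P n) x = 0}" using poly_roots_finite[OF P_nz] .
    moreover have "inj X" unfolding X_def inj_def using q0 q1 a1
      by (auto simp: power_inject_exp')
    ultimately show False using range_inj_infinite finite_subset by blast
  qed
  then obtain k where k: "F n k \<noteq> 0" by blast
  show ?thesis
  proof (rule suminf_pos2[where i=k])
    show "summable (\<lambda>k. V k * (F n k * F n k))" by (intro sumV2 bnd_mult bnd_F)
    show "0 \<le> V i * (F n i * F n i)" for i using V_pos[of i] by simp
    have sq: "F n k * F n k > 0" using k by (auto simp: zero_less_mult_iff linorder_neq_iff)
    show "0 < V k * (F n k * F n k)" using mult_pos_pos[OF V_pos sq] .
  qed
qed

lemma poch_conv: "convergent_prod (\<lambda>k. 1 - q^(Suc j) * q^k)"
proof -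
  have "convergent_prod (\<lambda>k. 1 + (- (q^(Suc j) * q^k)))"
  proof (rule summable_imp_convergent_prod_real)
    show "summable (\<lambda>k. \<bar>- (q ^ Suc j * q ^ k)\<bar>)"
      using q0 q1 by (simp add: summable_geometric summable_mult)
    fix k
    have "q^(Suc j) * q^k = q^(Suc (j + k))" by (simp add: power_add)
    also have "\<dots> < 1" using power_Suc_less_one[OF q0 q1] .
    finally show "- (q ^ Suc j * q ^ k) \<noteq> - 1" by auto
  qed
  thus ?thesis by simp
qed

definition "Qp j = qpoch_inf (q^(Suc j)) q"

lemma Qp_nz: "Qp j \<noteq> 0"
  unfolding Qp_def qpoch_inf_def
proof (rule prodinf_nonzero[OF poch_conv])
  fix k
  have "q^(Suc j) * q^k = q^(Suc (j + k))" by (simp add: power_add)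
  also have "\<dots> < 1" using power_Suc_less_one[OF q0 q1] .
  finally show "1 - q ^ Suc j * q ^ k \<noteq> 0" by auto
qed

lemma Qp_Suc: "Qp (Suc j) = Qp j / (1 - q^(Suc j))"
proof -
  have "(\<Prod>k. 1 - q^(Suc j) * q^(Suc k)) = Qp j / (1 - q^(Suc j) * q^0)"
    unfolding Qp_def qpoch_inf_def
    by (rule prodinf_split_head[OF poch_conv]) (use power_Suc_less_one[OF q0 q1, of j] in simp)
  moreover have "(\<lambda>k. 1 - q^(Suc j) * q^(Suc k)) = (\<lambda>k. 1 - q^(Suc (Suc j)) * q^k)" by (simp add: algebra_simps)
  ultimately show ?thesis unfolding Qp_def qpoch_inf_def by simp
qed

definition "G x = exp ((log q x - 1) / 2 * ln x)"

lemma G_Suc: assumes x: "x > 0" shows "G (q * x) = x * G x"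
proof -
  have lq: "ln q \<noteq> 0" using q0 q1 by simp
  have "log q (q*x) = 1 + log q x" using q0 q1 x by (simp add: log_mult)
  moreover have "ln (q*x) = ln q + ln x" using q0 x by (simp add: ln_mult)
  ultimately have "(log q (q*x) - 1) / 2 * ln (q*x) = (log q x - 1) / 2 * ln x + ln x"
    unfolding log_def using lq by (simp add: field_simps)
  hence "G (q * x) = exp ((log q x - 1) / 2 * ln x + ln x)" unfolding G_def by simp
  also have "\<dots> = x * G x" unfolding G_def exp_add using x by simp
  finally show ?thesis .
qed

definition "R j = (1 - q) * a1 * q^j * G (X j) * Qp j"

lemma R_Suc: "R (Suc j) = q * X j / (1 - q^(Suc j)) * R j"
  unfolding R_def X_Suc G_Suc[OF X_pos] Qp_Suc by simp

lemma R_nz: "R 0 \<noteq> 0" unfolding R_def G_def using q1 a1 Qp_nz by simp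

end

lemma (in qs) weight:
  fixes \<alpha> :: complex
  assumes alpha: "exp (\<alpha> * complex_of_real (ln q)) =
        complex_of_real (- (q powi (-2) * (q * (s + (1 - 1 / q) * t1))) / (s * a1))"
  shows "exp (\<alpha> * of_real (ln (X j))) * of_real (R j) =
     exp (\<alpha> * of_real (ln (X 0))) * of_real (R 0) * of_real (V j)"
proof (induction j)
  case 0 thus ?case by (simp add: V_def)
next
  case (Suc j)
  define Qa where "Qa = - (q powi (-2) * (q * (s + (1 - 1 / q) * t1))) / (s * a1)"
  have l: "ln (X (Suc j)) = ln q + ln (X j)" unfolding X_Suc using q0 X_pos[of j] by (simp add: ln_mult)
  have e: "exp (\<alpha> * of_real (ln (X (Suc j)))) = of_real Qa * exp (\<alpha> * of_real (ln (X j)))"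
    unfolding l using alpha unfolding Qa_def by (simp add: distrib_left exp_add)
  have r: "Qa * (q * X j / (1 - q^(Suc j))) = rr j"
  proof -
    have pw: "q powi (-2) = 1 / q^2" by (simp add: power_int_minus field_simps)
    have qs': "1 - q^(Suc j) \<noteq> 0" using power_Suc_less_one[OF q0 q1, of j] by simp
    show ?thesis unfolding Qa_def rr_def ww_def X_def pw using q0 s0 a1 qs'
      by (simp add: field_simps power2_eq_square)
  qed
  have "exp (\<alpha> * of_real (ln (X (Suc j)))) * of_real (R (Suc j))
      = of_real (Qa * (q * X j / (1 - q^(Suc j)))) * (exp (\<alpha> * of_real (ln (X j))) * of_real (R j))"
    unfolding e R_Suc by (simp add: algebra_simps)
  also have "\<dots> = of_real (rr j) * (exp (\<alpha> * of_real (ln (X 0))) * of_real (R 0) * of_real (V j))"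
    unfolding r Suc.IH ..
  also have "\<dots> = exp (\<alpha> * of_real (ln (X 0))) * of_real (R 0) * of_real (V (Suc j))"
    by (simp add: V_Suc algebra_simps)
  finally show ?case .
qed


theorem theorem5p16:
  fixes q s a1 t0 t1 :: real and \<alpha> :: complex
  assumes q: "0 < q" "q < 1"
    and s: "s \<noteq> 0"
    and a1: "a1 > 0"
    and t1: "t1 \<noteq> 0"
    and t0: "t0 / s = a1 / (1 - 1 / q)"
    and t1ne: "t1 / s \<noteq> - 1 / (1 - 1 / q)"
    and Lam: "q ^ 2 * (q powi (-2) * (1 + (1 - 1 / q) * t1 / s)) < 0"
    and alpha: "exp (\<alpha> * complex_of_real (ln q)) =
        complex_of_real (- (q powi (-2) * (q * (s + (1 - 1 / q) * t1))) / (s * a1))"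
  shows "\<exists>(P :: nat \<Rightarrow> real poly) (d :: nat \<Rightarrow> complex).
     (\<forall>n. P n \<noteq> 0 \<and> degree (P n) = n \<and> d n \<noteq> 0 \<and>
        (\<forall>x. (s * x * (x - a1)) * qD (1 / q) (qD q (poly (P n))) x
              + (t1 * x + t0) * qD q (poly (P n)) x
              + (- qnum q (int n) * (t1 + qnum (1 / q) (int n - 1) * s)) * poly (P n) x = 0)) \<and>
     (\<forall>m n. has_qint q
        (\<lambda>x. complex_of_real (poly (P n) x * poly (P m) x)
             * exp (\<alpha> * complex_of_real (ln \<bar>x\<bar>))
             * complex_of_real (exp ((log q x - 1) / 2 * ln x) * qpoch_inf (q * x / a1) q))
        a1 (if m = n then d n else 0))"
proof -
  have pw: "q powi (-2) = 1 / q^2" by (simp add: power_int_minus field_simps)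
  have "q ^ 2 * (q powi (-2) * (1 + (1 - 1 / q) * t1 / s)) = 1 + (1 - 1 / q) * t1 / s"
    unfolding pw using q by simp
  also have "\<dots> = (s + (1 - 1/q)*t1)/s" using s by (simp add: field_simps)
  finally have om: "(s + (1 - 1/q)*t1)/s < 0" using Lam by simp
  interpret Q: qs q s a1 t1 using q s a1 om by unfold_locales auto
  define d where "d n = exp (\<alpha> * of_real (ln (Q.X 0))) * of_real (Q.R 0)
      * of_real (\<Sum>k. Q.V k * (Q.F n k * Q.F n k))" for n
  have X0: "Q.X 0 > 0" by (rule Q.X_pos)
  show ?thesis
  proof (intro exI[of _ Q.P] exI[of _ d] conjI allI)
    fix n
    show "Q.P n \<noteq> 0" by (rule Q.P_nz)
    show "degree (Q.P n) = n" by (rule Q.degree_P)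
    show "d n \<noteq> 0" unfolding d_def using Q.R_nz Q.diag_pos[of n] by auto
    fix x
    show "(s * x * (x - a1)) * qD (1 / q) (qD q (poly (Q.P n))) x
              + (t1 * x + t0) * qD q (poly (Q.P n)) x
              + (- qnum q (int n) * (t1 + qnum (1 / q) (int n - 1) * s)) * poly (Q.P n) x = 0"
      by (rule Q.eqn[OF t0])
  next
    fix m n
    define S where "S = (\<Sum>k. Q.V k * (Q.F n k * Q.F m k))"
    have sm: "(\<lambda>k. Q.V k * (Q.F n k * Q.F m k)) sums S" unfolding S_def
      by (intro summable_sums Q.sumV2 Q.bnd_mult Q.bnd_F)
    have sm2: "(\<lambda>k. exp (\<alpha> * of_real (ln (Q.X 0))) * of_real (Q.R 0) * complex_of_real (Q.V k * (Q.F n k * Q.F m k)))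
       sums (exp (\<alpha> * of_real (ln (Q.X 0))) * of_real (Q.R 0) * complex_of_real S)"
      by (intro sums_mult sums_of_real sm)
    have tm: "complex_of_real ((1 - q) * a1 * q ^ j) *
        (complex_of_real (poly (Q.P n) (q ^ j * a1) * poly (Q.P m) (q ^ j * a1))
             * exp (\<alpha> * complex_of_real (ln \<bar>q ^ j * a1\<bar>))
             * complex_of_real (exp ((log q (q ^ j * a1) - 1) / 2 * ln (q ^ j * a1)) * qpoch_inf (q * (q ^ j * a1) / a1) q))
      = exp (\<alpha> * of_real (ln (Q.X 0))) * of_real (Q.R 0) * complex_of_real (Q.V j * (Q.F n j * Q.F m j))" for j
    proof -
      have xj: "q ^ j * a1 = Q.X j" by (simp add: Q.X_def)
      have ab: "\<bar>Q.X j\<bar> = Q.X j" using Q.X_pos[of j] by simp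
      have qx: "q * Q.X j / a1 = q ^ Suc j" using a1 by (simp add: Q.X_def)
      have "complex_of_real ((1 - q) * a1 * q ^ j) *
        (complex_of_real (poly (Q.P n) (q ^ j * a1) * poly (Q.P m) (q ^ j * a1))
             * exp (\<alpha> * complex_of_real (ln \<bar>q ^ j * a1\<bar>))
             * complex_of_real (exp ((log q (q ^ j * a1) - 1) / 2 * ln (q ^ j * a1)) * qpoch_inf (q * (q ^ j * a1) / a1) q))
        = exp (\<alpha> * of_real (ln (Q.X j))) * of_real (Q.R j) * complex_of_real (Q.F n j * Q.F m j)"
        unfolding xj ab qx Q.R_def Q.F_def Q.G_def Q.Qp_def by (simp add: algebra_simps)
      also have "\<dots> = exp (\<alpha> * of_real (ln (Q.X 0))) * of_real (Q.R 0) * complex_of_real (Q.V j * (Q.F n j * Q.F m j))"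
        unfolding Q.weight[OF alpha, of j] by (simp add: algebra_simps)
      finally show ?thesis .
    qed
    have S: "exp (\<alpha> * of_real (ln (Q.X 0))) * of_real (Q.R 0) * complex_of_real S = (if m = n then d n else 0)"
    proof (cases "m = n")
      case True thus ?thesis unfolding S_def d_def by simp
    next
      case False thus ?thesis unfolding S_def using Q.orth[OF False] by simp
    qed
    show "has_qint q
        (\<lambda>x. complex_of_real (poly (Q.P n) x * poly (Q.P m) x)
             * exp (\<alpha> * complex_of_real (ln \<bar>x\<bar>))
             * complex_of_real (exp ((log q x - 1) / 2 * ln x) * qpoch_inf (q * x / a1) q))
        a1 (if m = n then d n else 0)"
      unfolding has_qint_def tm S[symmetric] by (rule sm2)
  qed
qed

end
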